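(* Assume the general coarsening setting described in the context. Then CAR(GCMP) holds if and only if CAR(REL) holds, where: CAR(GCMP) means that for all $(\theta,\psi)$ the random variable $\mathcal{L}^{\psi/\psi_0}_{\mathcal{R}|\mathcal{X}}$ is $\mathcal{O}$-measurable; and CAR(REL) means that for all $\psi$ there is a version $(r,x)\mapsto\mathcal{L}^{\psi/\psi_0}_{\mathcal{R}|\mathcal{X}}(r,x)$ (a measurable function of the paths of $(R,X)$) such that for every path $r$ of $R$ and all paths $x,x'$ of $X$ with $rx=rx'$ (i.e. $r_tx_t=r_tx'_t$ for all $t$) one has $\mathcal{L}^{\psi/\psi_0}_{\mathcal{R}|\mathcal{X}}(r,x)=\mathcal{L}^{\psi/\psi_0}_{\mathcal{R}|\mathcal{X}}(r,x')$.
   Context: Setting. On a measurable space $(\Omega,\mathcal{F})$ live two càdlàg stochastic processes: $X=(X_t)_{t\ge0}$ with values in $\mathbb{R}^d$ (path space a Skorohod space with its Borel $\sigma$-field) and a response indicator process $R=(R_t)_{t\ge0}$ with values in $\{0,1\}$ (componentwise), $R_t=1$ meaning $X_t$ is observed. Let $\mathcal{X}=\sigma(X_t,t\ge0)$, $\mathcal{R}=\sigma(R_t,t\ge0)$, $\mathcal{F}=\mathcal{X}\vee\mathcal{R}$. A model is a family $\{P_{(\theta,\psi)}:(\theta,\psi)\in\Theta\times\Psi\}$ of mutually equivalent probability measures on $\mathcal{F}$ with reference measure $P_{(\theta_0,\psi_0)}$; the restriction of $P_{(\theta,\psi)}$ to $\mathcal{X}$ depends only on $\theta$. Non-informativeness: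 $P_{(\theta_1,\psi)}(A\mid\mathcal{X})=P_{(\theta_2,\psi)}(A\mid\mathcal{X})$ a.s. for all $A\in\mathcal{R}$, all $\theta_1,\theta_2,\psi$. For a sub-$\sigma$-field $\mathcal{G}$, $\mathcal{L}^{(\theta,\psi)/(\theta_0,\psi_0)}_{\mathcal{G}}$ is the Radon–Nikodym derivative $dP_{(\theta,\psi)}/dP_{(\theta_0,\psi_0)}$ restricted to $\mathcal{G}$. The conditional likelihood ratio of $\mathcal{Y}$ given $\mathcal{G}$ is the $\mathcal{G}\vee\mathcal{Y}$-measurable variable $\mathcal{L}_{\mathcal{Y}|\mathcal{G}}=\mathcal{L}_{\mathcal{G}\vee\mathcal{Y}}/\mathcal{L}_{\mathcal{G}}$ (it satisfies $E_{(\theta,\psi)}[1_A\mid\mathcal{G}]=E_{(\theta_0,\psi_0)}[1_A\mathcal{L}_{\mathcal{Y}|\mathcal{G}}\mid\mathcal{G}]$ for $A\in\mathcal{Y}$). By non-informativeness $\mathcal{L}^{(\theta,\psi)/(\theta_0,\psi_0)}_{\mathcal{R}|\mathcal{X}}$ does not depend on $\theta$ and is denoted $\mathcal{L}^{\psi/\psi_0}_{\mathcal{R}|\mathcal{X}}$. The observed $\sigma$-field is $\mathcal{O}=\sigma(R_tX_t,R_t,\ t\ge0)$. *)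

theory Defs
  imports "HOL-Probability.Probability"
begin

text \<open>Cadlag paths on the time axis [0,oo). Paths are represented as functions on all
  of real, normalised to the value 0 at negative times.\<close>
definition cadlag :: "(real \<Rightarrow> 'a::topological_space) \<Rightarrow> bool" where
  "cadlag f \<longleftrightarrow> (\<forall>t\<ge>0. continuous (at_right t) f) \<and> (\<forall>t>0. \<exists>l. (f \<longlongrightarrow> l) (at_left t))"

definition cadlag_paths :: "'a set \<Rightarrow> (real \<Rightarrow> 'a::{topological_space,zero}) set" where
  "cadlag_paths S = {f. cadlag f \<and> (\<forall>t\<ge>0. f t \<in> S) \<and> (\<forall>t<0. f t = 0)}"

text \<open>Path space: cadlag paths with the sigma-field generated by the coordinate maps
  (which coincides with the Borel sigma-field of the Skorohod topology).\<close>
definition path_space :: "'a set \<Rightarrow> (real \<Rightarrow> 'a::{topological_space,zero}) measure" where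
  "path_space S = restrict_space (Pi\<^sub>M UNIV (\<lambda>_. borel)) (cadlag_paths S)"

definition binvals :: "(real ^ 'd) set" where
  "binvals = {v. \<forall>i. v $ i = 0 \<or> v $ i = 1}"

definition gen_sigma :: "'w set \<Rightarrow> ('w \<Rightarrow> 'a::topological_space) set \<Rightarrow> 'w measure" where
  "gen_sigma \<Omega> Fs = sigma \<Omega> {f -` A \<inter> \<Omega> | f A. f \<in> Fs \<and> A \<in> sets borel}"

definition sigma_X :: "'w set \<Rightarrow> ('w \<Rightarrow> real \<Rightarrow> real ^ 'd) \<Rightarrow> 'w measure" where
  "sigma_X \<Omega> X = gen_sigma \<Omega> {(\<lambda>\<omega>. X \<omega> t) | t. 0 \<le> t}"

definition sigma_R :: "'w set \<Rightarrow> ('w \<Rightarrow> real \<Rightarrow> real ^ 'd) \<Rightarrow> 'w measure" where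
  "sigma_R \<Omega> R = gen_sigma \<Omega> {(\<lambda>\<omega>. R \<omega> t) | t. 0 \<le> t}"

definition sigma_F :: "'w set \<Rightarrow> ('w \<Rightarrow> real \<Rightarrow> real ^ 'd) \<Rightarrow> ('w \<Rightarrow> real \<Rightarrow> real ^ 'd) \<Rightarrow> 'w measure" where
  "sigma_F \<Omega> X R = gen_sigma \<Omega> ({(\<lambda>\<omega>. X \<omega> t) | t. 0 \<le> t} \<union> {(\<lambda>\<omega>. R \<omega> t) | t. 0 \<le> t})"

definition sigma_O :: "'w set \<Rightarrow> ('w \<Rightarrow> real \<Rightarrow> real ^ 'd) \<Rightarrow> ('w \<Rightarrow> real \<Rightarrow> real ^ 'd) \<Rightarrow> 'w measure" where
  "sigma_O \<Omega> X R = gen_sigma \<Omega> ({(\<lambda>\<omega>. R \<omega> t * X \<omega> t) | t. 0 \<le> t} \<union> {(\<lambda>\<omega>. R \<omega> t) | t. 0 \<le> t})"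

definition restr_measure :: "'w measure \<Rightarrow> 'w measure \<Rightarrow> 'w measure" where
  "restr_measure M G = measure_of (space M) (sets G) (emeasure M)"

definition lik_ratio :: "'w measure \<Rightarrow> 'w measure \<Rightarrow> 'w measure \<Rightarrow> 'w \<Rightarrow> real" where
  "lik_ratio P P0 G = (\<lambda>\<omega>. enn2real (RN_deriv (restr_measure P0 G) (restr_measure P G) \<omega>))"

definition cond_lik_ratio :: "'w measure \<Rightarrow> 'w measure \<Rightarrow> 'w measure \<Rightarrow> 'w measure \<Rightarrow> 'w \<Rightarrow> real" where
  "cond_lik_ratio P P0 G GY = (\<lambda>\<omega>. lik_ratio P P0 GY \<omega> / lik_ratio P P0 G \<omega>)"

end

theory Submission imports Defs begin

lemma factor_enn:
  assumes T: "T \<in> \<Omega> \<rightarrow> space M" and u: "u \<in> borel_measurable (vimage_algebra \<Omega> T M)"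
  shows "\<exists>h\<in>borel_measurable M. \<forall>\<omega>\<in>\<Omega>. u \<omega> = (h (T \<omega>) :: ennreal)"
  using u
proof (induct rule: borel_measurable_induct)
  case (cong f g)
  then show ?case by auto
next
  case (set A)
  then obtain B where B: "B \<in> sets M" "A = T -` B \<inter> \<Omega>"
    using sets_vimage_algebra2[OF T] by auto
  show ?case
  proof (rule bexI[where x="indicator B"])
    show "indicator B \<in> borel_measurable M" using B(1) by simp
    show "\<forall>\<omega>\<in>\<Omega>. indicator A \<omega> = indicator B (T \<omega>)"
      unfolding B(2) by (simp add: indicator_def)
  qed
next
  case (mult u c)
  then obtain h where h: "h \<in> borel_measurable M" "\<forall>\<omega>\<in>\<Omega>. u \<omega> = h (T \<omega>)" by blast
  show ?case
    by (rule bexI[where x="\<lambda>y. c * h y"]) (use h in simp_all)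
next
  case (add u v)
  then obtain h where h: "h \<in> borel_measurable M" "\<forall>\<omega>\<in>\<Omega>. u \<omega> = h (T \<omega>)" by blast
  from add obtain k where k: "k \<in> borel_measurable M" "\<forall>\<omega>\<in>\<Omega>. v \<omega> = k (T \<omega>)" by blast
  show ?case
    by (rule bexI[where x="\<lambda>y. k y + h y"]) (use h k in simp_all)
next
  case (seq U)
  then have "\<forall>i. \<exists>h\<in>borel_measurable M. \<forall>\<omega>\<in>\<Omega>. U i \<omega> = h (T \<omega>)" by blast
  then obtain h where h: "\<And>i. h i \<in> borel_measurable M" "\<And>i \<omega>. \<omega>\<in>\<Omega> \<Longrightarrow> U i \<omega> = h i (T \<omega>)"
    by metis
  show ?case
  proof (rule bexI[where x="\<lambda>y. SUP i. h i y"])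
    show "(\<lambda>y. SUP i. h i y) \<in> borel_measurable M" using h(1) by measurable
    show "\<forall>\<omega>\<in>\<Omega>. (SUP i. U i) \<omega> = (SUP i. h i (T \<omega>))"
      using h(2) by (simp add: image_image)
  qed
qed

lemma factor_real:
  assumes T: "T \<in> \<Omega> \<rightarrow> space M" and f: "f \<in> borel_measurable (vimage_algebra \<Omega> T M)"
  shows "\<exists>h\<in>borel_measurable M. \<forall>\<omega>\<in>\<Omega>. f \<omega> = (h (T \<omega>) :: real)"
proof -
  have "(\<lambda>\<omega>. ennreal (f \<omega>)) \<in> borel_measurable (vimage_algebra \<Omega> T M)" using f by simp
  from factor_enn[OF T this] obtain h1 where h1: "h1 \<in> borel_measurable M"
    "\<forall>\<omega>\<in>\<Omega>. ennreal (f \<omega>) = h1 (T \<omega>)" by auto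
  have "(\<lambda>\<omega>. ennreal (- f \<omega>)) \<in> borel_measurable (vimage_algebra \<Omega> T M)" using f by simp
  from factor_enn[OF T this] obtain h2 where h2: "h2 \<in> borel_measurable M"
    "\<forall>\<omega>\<in>\<Omega>. ennreal (- f \<omega>) = h2 (T \<omega>)" by auto
  show ?thesis
  proof (rule bexI[where x="\<lambda>y. enn2real (h1 y) - enn2real (h2 y)"])
    show "\<forall>\<omega>\<in>\<Omega>. f \<omega> = enn2real (h1 (T \<omega>)) - enn2real (h2 (T \<omega>))"
    proof
      fix \<omega> assume "\<omega> \<in> \<Omega>"
      then have "h1 (T \<omega>) = ennreal (f \<omega>)" "h2 (T \<omega>) = ennreal (- f \<omega>)" using h1 h2 by auto
      then show "f \<omega> = enn2real (h1 (T \<omega>)) - enn2real (h2 (T \<omega>))"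
        by (cases "f \<omega> \<ge> 0") (auto simp: ennreal_neg)
    qed
    show "(\<lambda>y. enn2real (h1 y) - enn2real (h2 y)) \<in> borel_measurable M" using h1(1) h2(1) by measurable
  qed
qed



lemma tendsto_vmult:
  fixes f g :: "'a \<Rightarrow> real ^ 'd::finite"
  assumes "(f \<longlongrightarrow> a) F" "(g \<longlongrightarrow> b) F"
  shows "((\<lambda>t. f t * g t) \<longlongrightarrow> a * b) F"
proof (rule vec_tendstoI)
  fix i
  have "((\<lambda>t. f t $ i * g t $ i) \<longlongrightarrow> a $ i * b $ i) F"
    by (intro tendsto_mult tendsto_vec_nth assms)
  then show "((\<lambda>t. (f t * g t) $ i) \<longlongrightarrow> (a * b) $ i) F"
    by (simp add: times_vec_def)
qed

lemma continuous_vmult: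
  fixes f g :: "'a::t2_space \<Rightarrow> real ^ 'd::finite"
  assumes "continuous F f" "continuous F g"
  shows "continuous F (\<lambda>t. f t * g t)"
  using assms unfolding continuous_def by (rule tendsto_vmult)

lemma cadlag_vmult:
  fixes f g :: "real \<Rightarrow> real ^ 'd::finite"
  assumes "cadlag f" "cadlag g"
  shows "cadlag (\<lambda>t. f t * g t)"
  unfolding cadlag_def
proof safe
  fix t :: real assume "0 \<le> t"
  then show "continuous (at_right t) (\<lambda>t. f t * g t)"
    using assms unfolding cadlag_def by (intro continuous_vmult) auto
next
  fix t :: real assume "0 < t"
  then obtain l m where "(f \<longlongrightarrow> l) (at_left t)" "(g \<longlongrightarrow> m) (at_left t)"
    using assms unfolding cadlag_def by blast
  then show "\<exists>l. ((\<lambda>t. f t * g t) \<longlongrightarrow> l) (at_left t)"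
    by (blast intro: tendsto_vmult)
qed

lemma paths_vmult:
  fixes r x :: "real \<Rightarrow> real ^ 'd::finite"
  assumes "r \<in> cadlag_paths binvals" "x \<in> cadlag_paths UNIV"
  shows "(\<lambda>t. r t * x t) \<in> cadlag_paths UNIV"
  using assms unfolding cadlag_paths_def by (auto intro: cadlag_vmult)

lemma binvals_idem:
  fixes v x :: "real ^ 'd::finite"
  assumes "v \<in> binvals"
  shows "v * (v * x) = v * x"
proof -
  have "\<And>i. v $ i * (v $ i * x $ i) = v $ i * x $ i"
  proof -
    fix i
    have "v $ i = 0 \<or> v $ i = 1" using assms unfolding binvals_def by blast
    then show "v $ i * (v $ i * x $ i) = v $ i * x $ i" by (elim disjE) simp_all
  qed
  then show ?thesis by (simp add: times_vec_def vec_eq_iff)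
qed

lemma space_path_space: "space (path_space S) = cadlag_paths S"
  by (auto simp: path_space_def space_restrict_space space_PiM)

lemma measurable_path:
  fixes F :: "'w \<Rightarrow> real \<Rightarrow> real ^ 'd::finite"
  assumes "\<And>t. (\<lambda>\<omega>. F \<omega> t) \<in> borel_measurable N"
    and "\<And>\<omega>. \<omega> \<in> space N \<Longrightarrow> F \<omega> \<in> cadlag_paths S"
  shows "F \<in> measurable N (path_space S)"
  unfolding path_space_def
proof (rule measurable_restrict_space2)
  show "F \<in> space N \<rightarrow> cadlag_paths S" using assms(2) by auto
  have "(\<lambda>\<omega> t. F \<omega> t) \<in> measurable N (Pi\<^sub>M UNIV (\<lambda>_. borel))"
    by (rule measurable_PiM_single') (use assms(1) in auto)
  then show "F \<in> measurable N (Pi\<^sub>M UNIV (\<lambda>_. borel))" by simp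
qed

lemma measurable_coord:
  "(\<lambda>x. x t) \<in> borel_measurable (path_space S)"
  unfolding path_space_def
  by (rule measurable_restrict_space1) (rule measurable_component_singleton, simp)

lemma continuous_on_vmult: "continuous_on UNIV (\<lambda>z::((real^'d::finite) \<times> (real^'d)). fst z * snd z)"
  by (rule continuous_at_imp_continuous_on, intro ballI continuous_vmult continuous_fst continuous_snd continuous_ident)

lemma borel_vmult: "(\<lambda>z::((real^'d::finite) \<times> (real^'d)). fst z * snd z) \<in> borel_measurable (borel \<Otimes>\<^sub>M borel)"
proof -
  have "(\<lambda>z::((real^'d::finite) \<times> (real^'d)). fst z * snd z) \<in> borel_measurable borel"
    by (rule borel_measurable_continuous_onI[OF continuous_on_vmult])
  then show ?thesis by (simp add: borel_prod)
qed

lemma measurable_vmult: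
  fixes a b :: "'w \<Rightarrow> real ^ 'd::finite"
  assumes "a \<in> borel_measurable N" "b \<in> borel_measurable N"
  shows "(\<lambda>\<omega>. a \<omega> * b \<omega>) \<in> borel_measurable N"
proof -
  have "(\<lambda>\<omega>. (a \<omega>, b \<omega>)) \<in> measurable N (borel \<Otimes>\<^sub>M borel)"
    using assms by (rule measurable_Pair)
  from measurable_comp[OF this borel_vmult] show ?thesis by (simp add: comp_def)
qed

lemma gen_sigma_space: "space (gen_sigma \<Omega> Fs) = \<Omega>"
  unfolding gen_sigma_def by (rule space_measure_of) auto

lemma gen_sigma_sets: "sets (gen_sigma \<Omega> Fs) = sigma_sets \<Omega> {f -` A \<inter> \<Omega> | f A. f \<in> Fs \<and> A \<in> sets borel}"
  unfolding gen_sigma_def by (rule sets_measure_of) auto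

lemma gen_sigma_meas:
  assumes "f \<in> Fs"
  shows "f \<in> borel_measurable (gen_sigma \<Omega> Fs)"
proof (rule measurableI)
  fix A :: "'b set" assume "A \<in> sets borel"
  then show "f -` A \<inter> space (gen_sigma \<Omega> Fs) \<in> sets (gen_sigma \<Omega> Fs)"
    using assms unfolding gen_sigma_space gen_sigma_sets
    by (intro sigma_sets.Basic) blast
qed simp


lemma R_meas:
  fixes X R :: "'w \<Rightarrow> real \<Rightarrow> real ^ 'd::finite"
  assumes paths: "\<And>\<omega>. \<omega> \<in> \<Omega> \<Longrightarrow> X \<omega> \<in> cadlag_paths UNIV \<and> R \<omega> \<in> cadlag_paths binvals"
  shows "(\<lambda>\<omega>. R \<omega> t) \<in> borel_measurable (sigma_O \<Omega> X R)"
proof (cases "0 \<le> t")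
  case True
  then show ?thesis unfolding sigma_O_def by (intro gen_sigma_meas) blast
next
  case False
  have "(\<lambda>\<omega>. R \<omega> t) \<in> borel_measurable (sigma_O \<Omega> X R) \<longleftrightarrow> (\<lambda>\<omega>. 0::real^'d) \<in> borel_measurable (sigma_O \<Omega> X R)"
    by (rule measurable_cong) (use False paths in \<open>auto simp: sigma_O_def gen_sigma_space cadlag_paths_def\<close>)
  then show ?thesis by simp
qed

lemma RX_meas:
  fixes X R :: "'w \<Rightarrow> real \<Rightarrow> real ^ 'd::finite"
  assumes paths: "\<And>\<omega>. \<omega> \<in> \<Omega> \<Longrightarrow> X \<omega> \<in> cadlag_paths UNIV \<and> R \<omega> \<in> cadlag_paths binvals"
  shows "(\<lambda>\<omega>. R \<omega> t * X \<omega> t) \<in> borel_measurable (sigma_O \<Omega> X R)"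
proof (cases "0 \<le> t")
  case True
  then show ?thesis unfolding sigma_O_def by (intro gen_sigma_meas) blast
next
  case False
  have "(\<lambda>\<omega>. R \<omega> t * X \<omega> t) \<in> borel_measurable (sigma_O \<Omega> X R) \<longleftrightarrow> (\<lambda>\<omega>. 0::real^'d) \<in> borel_measurable (sigma_O \<Omega> X R)"
    by (rule measurable_cong) (use False paths in \<open>auto simp: sigma_O_def gen_sigma_space cadlag_paths_def\<close>)
  then show ?thesis by simp
qed

lemma obs_meas:
  fixes X R :: "'w \<Rightarrow> real \<Rightarrow> real ^ 'd::finite"
  assumes paths: "\<And>\<omega>. \<omega> \<in> \<Omega> \<Longrightarrow> X \<omega> \<in> cadlag_paths UNIV \<and> R \<omega> \<in> cadlag_paths binvals"
  shows "(\<lambda>\<omega>. (R \<omega>, \<lambda>t. R \<omega> t * X \<omega> t)) \<in> measurable (sigma_O \<Omega> X R) (path_space binvals \<Otimes>\<^sub>M path_space UNIV)"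
proof (rule measurable_Pair)
  have sp: "space (sigma_O \<Omega> X R) = \<Omega>" by (simp add: sigma_O_def gen_sigma_space)
  show "R \<in> measurable (sigma_O \<Omega> X R) (path_space binvals)"
  proof (rule measurable_path)
    fix t show "(\<lambda>\<omega>. R \<omega> t) \<in> borel_measurable (sigma_O \<Omega> X R)" using R_meas paths by blast
  next
    fix \<omega> assume "\<omega> \<in> space (sigma_O \<Omega> X R)"
    then show "R \<omega> \<in> cadlag_paths binvals" using paths sp by auto
  qed
  show "(\<lambda>\<omega> t. R \<omega> t * X \<omega> t) \<in> measurable (sigma_O \<Omega> X R) (path_space UNIV)"
  proof (rule measurable_path)
    fix t show "(\<lambda>\<omega>. R \<omega> t * X \<omega> t) \<in> borel_measurable (sigma_O \<Omega> X R)" using RX_meas paths by blast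
  next
    fix \<omega> assume "\<omega> \<in> space (sigma_O \<Omega> X R)"
    then have "\<omega> \<in> \<Omega>" using sp by simp
    then show "(\<lambda>t. R \<omega> t * X \<omega> t) \<in> cadlag_paths UNIV" using paths paths_vmult by blast
  qed
qed

lemma obs_sets:
  fixes X R :: "'w \<Rightarrow> real \<Rightarrow> real ^ 'd::finite"
  assumes paths: "\<And>\<omega>. \<omega> \<in> \<Omega> \<Longrightarrow> X \<omega> \<in> cadlag_paths UNIV \<and> R \<omega> \<in> cadlag_paths binvals"
  shows "sets (sigma_O \<Omega> X R) \<subseteq> sets (vimage_algebra \<Omega> (\<lambda>\<omega>. (R \<omega>, \<lambda>t. R \<omega> t * X \<omega> t)) (path_space binvals \<Otimes>\<^sub>M path_space UNIV))"
    (is "_ \<subseteq> sets ?V")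
proof -
  let ?T = "\<lambda>\<omega>. (R \<omega>, \<lambda>t. R \<omega> t * X \<omega> t)"
  let ?PS = "path_space binvals \<Otimes>\<^sub>M path_space UNIV"
  have Tsp: "?T \<omega> \<in> space ?PS" if "\<omega> \<in> \<Omega>" for \<omega>
    using paths[OF that] paths_vmult by (auto simp: space_pair_measure space_path_space)
  have G: "{f -` A \<inter> \<Omega> | f A. f \<in> ({(\<lambda>\<omega>. R \<omega> t * X \<omega> t) | t. 0 \<le> t} \<union> {(\<lambda>\<omega>. R \<omega> t) | t. 0 \<le> t}) \<and> A \<in> sets borel}
     \<subseteq> sets ?V"
  proof safe
    fix t :: real and A :: "(real ^ 'd) set"
    assume A: "A \<in> sets borel"
    have m1: "(\<lambda>p. snd p t) \<in> borel_measurable ?PS"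
      by (rule measurable_compose[OF measurable_snd measurable_coord])
    have m2: "(\<lambda>p. fst p t) \<in> borel_measurable ?PS"
      by (rule measurable_compose[OF measurable_fst measurable_coord])
    have B1: "{p \<in> space ?PS. snd p t \<in> A} \<in> sets ?PS" using m1 A by measurable
    have B2: "{p \<in> space ?PS. fst p t \<in> A} \<in> sets ?PS" using m2 A by measurable
    have e1: "(\<lambda>\<omega>. R \<omega> t * X \<omega> t) -` A \<inter> \<Omega> = ?T -` {p \<in> space ?PS. snd p t \<in> A} \<inter> \<Omega>"
      using Tsp by auto
    then show "(\<lambda>\<omega>. R \<omega> t * X \<omega> t) -` A \<inter> \<Omega> \<in> sets ?V"
      by (subst e1) (rule in_vimage_algebra[OF B1])
    have e2: "(\<lambda>\<omega>. R \<omega> t) -` A \<inter> \<Omega> = ?T -` {p \<in> space ?PS. fst p t \<in> A} \<inter> \<Omega>"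
      using Tsp by auto
    then show "(\<lambda>\<omega>. R \<omega> t) -` A \<inter> \<Omega> \<in> sets ?V"
      by (subst e2) (rule in_vimage_algebra[OF B2])
  qed
  have "sigma_sets (space ?V) {f -` A \<inter> \<Omega> | f A. f \<in> ({(\<lambda>\<omega>. R \<omega> t * X \<omega> t) | t. 0 \<le> t} \<union> {(\<lambda>\<omega>. R \<omega> t) | t. 0 \<le> t}) \<and> A \<in> sets borel} \<subseteq> sets ?V"
    by (rule sets.sigma_sets_subset[OF G])
  then show ?thesis by (simp add: sigma_O_def gen_sigma_sets)
qed


theorem theorem1:
  fixes \<Omega> :: "'w set"
    and X R :: "'w \<Rightarrow> real \<Rightarrow> real ^ 'd::finite"
    and P :: "'th \<Rightarrow> 'ps \<Rightarrow> 'w measure"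
    and \<theta>0 :: 'th and \<psi>0 :: 'ps
  assumes paths: "\<And>\<omega>. \<omega> \<in> \<Omega> \<Longrightarrow> X \<omega> \<in> cadlag_paths UNIV \<and> R \<omega> \<in> cadlag_paths binvals"
    and space_P: "\<And>\<theta> \<psi>. space (P \<theta> \<psi>) = \<Omega>"
    and sets_P: "\<And>\<theta> \<psi>. sets (P \<theta> \<psi>) = sets (sigma_F \<Omega> X R)"
    and prob_P: "\<And>\<theta> \<psi>. prob_space (P \<theta> \<psi>)"
    and equiv_P: "\<And>\<theta> \<psi> \<theta>' \<psi>'. absolutely_continuous (P \<theta> \<psi>) (P \<theta>' \<psi>')"
    and X_marginal: "\<And>\<theta> \<psi> \<psi>' A. A \<in> sets (sigma_X \<Omega> X) \<Longrightarrow>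
                        measure (P \<theta> \<psi>) A = measure (P \<theta> \<psi>') A"
    and non_informative: "\<And>\<theta>1 \<theta>2 \<psi> A. A \<in> sets (sigma_R \<Omega> R) \<Longrightarrow>
        AE \<omega> in P \<theta>1 \<psi>. real_cond_exp (P \<theta>1 \<psi>) (sigma_X \<Omega> X) (indicator A) \<omega>
                        = real_cond_exp (P \<theta>2 \<psi>) (sigma_X \<Omega> X) (indicator A) \<omega>"
  shows "(\<forall>\<theta> \<psi>. \<exists>f \<in> borel_measurable (sigma_O \<Omega> X R).
            AE \<omega> in P \<theta>0 \<psi>0.
              cond_lik_ratio (P \<theta> \<psi>) (P \<theta>0 \<psi>0) (sigma_X \<Omega> X) (sigma_F \<Omega> X R) \<omega> = f \<omega>)
     \<longleftrightarrow>
         (\<forall>\<theta> \<psi>. \<exists>g \<in> borel_measurable (path_space binvals \<Otimes>\<^sub>M path_space UNIV).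
            (AE \<omega> in P \<theta>0 \<psi>0.
              cond_lik_ratio (P \<theta> \<psi>) (P \<theta>0 \<psi>0) (sigma_X \<Omega> X) (sigma_F \<Omega> X R) \<omega> = g (R \<omega>, X \<omega>))
            \<and> (\<forall>r \<in> cadlag_paths binvals. \<forall>x \<in> cadlag_paths UNIV. \<forall>x' \<in> cadlag_paths UNIV.
                  (\<forall>t\<ge>0. r t * x t = r t * x' t) \<longrightarrow> g (r, x) = g (r, x')))"
proof -
  let ?T = "\<lambda>\<omega>. (R \<omega>, \<lambda>t. R \<omega> t * X \<omega> t)"
  let ?PS = "path_space binvals \<Otimes>\<^sub>M path_space UNIV :: ((real \<Rightarrow> real ^ 'd) \<times> (real \<Rightarrow> real ^ 'd)) measure"
  let ?L = "\<lambda>\<theta> \<psi>. cond_lik_ratio (P \<theta> \<psi>) (P \<theta>0 \<psi>0) (sigma_X \<Omega> X) (sigma_F \<Omega> X R)"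
  have sp: "space (sigma_O \<Omega> X R) = \<Omega>" by (simp add: sigma_O_def gen_sigma_space)
  have Tsp: "?T \<in> \<Omega> \<rightarrow> space ?PS"
    using paths paths_vmult by (auto simp: space_pair_measure space_path_space)
  have Tm: "?T \<in> measurable (sigma_O \<Omega> X R) ?PS"
    by (rule obs_meas) (simp add: paths)
  have spPS: "fst p \<in> cadlag_paths binvals \<and> snd p \<in> cadlag_paths UNIV" if "p \<in> space ?PS" for p
    using that by (auto simp: space_pair_measure space_path_space)
  have PSmap: "(\<lambda>p. (fst p, \<lambda>t. fst p t * snd p t)) \<in> measurable ?PS ?PS"
  proof (rule measurable_Pair)
    show "fst \<in> measurable ?PS (path_space binvals)" by (rule measurable_fst)
    show "(\<lambda>p t. fst p t * snd p t) \<in> measurable ?PS (path_space UNIV)"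
    proof (rule measurable_path)
      fix t
      have m1: "(\<lambda>p. snd p t) \<in> borel_measurable ?PS"
        by (rule measurable_compose[OF measurable_snd measurable_coord])
      have m2: "(\<lambda>p. fst p t) \<in> borel_measurable ?PS"
        by (rule measurable_compose[OF measurable_fst measurable_coord])
      show "(\<lambda>p. fst p t * snd p t) \<in> borel_measurable ?PS"
        by (rule measurable_vmult[OF m2 m1])
    next
      fix p :: "(real \<Rightarrow> real ^ 'd) \<times> (real \<Rightarrow> real ^ 'd)" assume "p \<in> space ?PS"
      then show "(\<lambda>t. fst p t * snd p t) \<in> cadlag_paths UNIV"
        using spPS paths_vmult by blast
    qed
  qed
  have AEsp: "AE \<omega> in P \<theta>0 \<psi>0. \<omega> \<in> \<Omega>"
    using AE_space[of "P \<theta>0 \<psi>0"] space_P by simp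
  show ?thesis
  proof
    assume L: "\<forall>\<theta> \<psi>. \<exists>f \<in> borel_measurable (sigma_O \<Omega> X R). AE \<omega> in P \<theta>0 \<psi>0. ?L \<theta> \<psi> \<omega> = f \<omega>"
    show "\<forall>\<theta> \<psi>. \<exists>g \<in> borel_measurable ?PS.
            (AE \<omega> in P \<theta>0 \<psi>0. ?L \<theta> \<psi> \<omega> = g (R \<omega>, X \<omega>))
            \<and> (\<forall>r \<in> cadlag_paths binvals. \<forall>x \<in> cadlag_paths UNIV. \<forall>x' \<in> cadlag_paths UNIV.
                  (\<forall>t\<ge>0. r t * x t = r t * x' t) \<longrightarrow> g (r, x) = g (r, x'))"
    proof (intro allI)
      fix \<theta> \<psi>
      from L obtain f where f: "f \<in> borel_measurable (sigma_O \<Omega> X R)"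
        "AE \<omega> in P \<theta>0 \<psi>0. ?L \<theta> \<psi> \<omega> = f \<omega>" by blast
      have "measurable (sigma_O \<Omega> X R) borel \<subseteq> measurable (vimage_algebra \<Omega> ?T ?PS) borel"
        by (rule measurable_mono) (use obs_sets[of \<Omega> X R] paths sp in auto)
      with f(1) have "f \<in> borel_measurable (vimage_algebra \<Omega> ?T ?PS)" by blast
      from factor_real[OF Tsp this] obtain h where h: "h \<in> borel_measurable ?PS"
        "\<forall>\<omega>\<in>\<Omega>. f \<omega> = h (?T \<omega>)" by blast
      define g where "g = (\<lambda>p. h (fst p, \<lambda>t. fst p t * snd p t))"
      show "\<exists>g \<in> borel_measurable ?PS.
            (AE \<omega> in P \<theta>0 \<psi>0. ?L \<theta> \<psi> \<omega> = g (R \<omega>, X \<omega>))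
            \<and> (\<forall>r \<in> cadlag_paths binvals. \<forall>x \<in> cadlag_paths UNIV. \<forall>x' \<in> cadlag_paths UNIV.
                  (\<forall>t\<ge>0. r t * x t = r t * x' t) \<longrightarrow> g (r, x) = g (r, x'))"
      proof (rule bexI[of _ g], intro conjI)
        show "AE \<omega> in P \<theta>0 \<psi>0. ?L \<theta> \<psi> \<omega> = g (R \<omega>, X \<omega>)"
          using f(2) AEsp by eventually_elim (use h(2) in \<open>simp add: g_def\<close>)
        show "\<forall>r \<in> cadlag_paths binvals. \<forall>x \<in> cadlag_paths UNIV. \<forall>x' \<in> cadlag_paths UNIV.
                  (\<forall>t\<ge>0. r t * x t = r t * x' t) \<longrightarrow> g (r, x) = g (r, x')"
        proof (intro ballI impI)
          fix r x x' :: "real \<Rightarrow> real ^ 'd" assume r: "r \<in> cadlag_paths binvals" and eq: "\<forall>t\<ge>0. r t * x t = r t * x' t"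
          have "(\<lambda>t. r t * x t) = (\<lambda>t. r t * x' t)"
          proof
            fix t show "r t * x t = r t * x' t"
            proof (cases "0 \<le> t")
              case True then show ?thesis using eq by blast
            next
              case False then have "r t = 0" using r by (simp add: cadlag_paths_def)
              then show ?thesis by simp
            qed
          qed
          then show "g (r, x) = g (r, x')" by (simp add: g_def)
        qed
        have "(h \<circ> (\<lambda>p. (fst p, \<lambda>t. fst p t * snd p t))) \<in> borel_measurable ?PS"
          by (rule measurable_comp[OF PSmap h(1)])
        then show "g \<in> borel_measurable ?PS" by (simp add: g_def comp_def)
      qed
    qed
  next
    assume Rr: "\<forall>\<theta> \<psi>. \<exists>g \<in> borel_measurable ?PS.
            (AE \<omega> in P \<theta>0 \<psi>0. ?L \<theta> \<psi> \<omega> = g (R \<omega>, X \<omega>))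
            \<and> (\<forall>r \<in> cadlag_paths binvals. \<forall>x \<in> cadlag_paths UNIV. \<forall>x' \<in> cadlag_paths UNIV.
                  (\<forall>t\<ge>0. r t * x t = r t * x' t) \<longrightarrow> g (r, x) = g (r, x'))"
    show "\<forall>\<theta> \<psi>. \<exists>f \<in> borel_measurable (sigma_O \<Omega> X R). AE \<omega> in P \<theta>0 \<psi>0. ?L \<theta> \<psi> \<omega> = f \<omega>"
    proof (intro allI)
      fix \<theta> \<psi>
      from Rr obtain g where g: "g \<in> borel_measurable ?PS"
        "AE \<omega> in P \<theta>0 \<psi>0. ?L \<theta> \<psi> \<omega> = g (R \<omega>, X \<omega>)"
        "\<forall>r \<in> cadlag_paths binvals. \<forall>x \<in> cadlag_paths UNIV. \<forall>x' \<in> cadlag_paths UNIV.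
                  (\<forall>t\<ge>0. r t * x t = r t * x' t) \<longrightarrow> g (r, x) = g (r, x')" by blast
      have gT: "g (R \<omega>, X \<omega>) = g (?T \<omega>)" if \<omega>: "\<omega> \<in> \<Omega>" for \<omega>
      proof -
        have r: "R \<omega> \<in> cadlag_paths binvals" and x: "X \<omega> \<in> cadlag_paths UNIV" using paths[OF \<omega>] by auto
        have x': "(\<lambda>t. R \<omega> t * X \<omega> t) \<in> cadlag_paths UNIV" using paths_vmult[OF r x] .
        have "\<forall>t\<ge>0. R \<omega> t * X \<omega> t = R \<omega> t * (R \<omega> t * X \<omega> t)"
        proof (intro allI impI)
          fix t :: real assume "0 \<le> t"
          then have "R \<omega> t \<in> binvals" using r by (simp add: cadlag_paths_def)
          then show "R \<omega> t * X \<omega> t = R \<omega> t * (R \<omega> t * X \<omega> t)" by (simp add: binvals_idem)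
        qed
        then show ?thesis by (rule g(3)[THEN bspec, THEN bspec, THEN bspec, THEN mp, OF r x x'])
      qed
      show "\<exists>f \<in> borel_measurable (sigma_O \<Omega> X R). AE \<omega> in P \<theta>0 \<psi>0. ?L \<theta> \<psi> \<omega> = f \<omega>"
      proof (rule bexI[of _ "\<lambda>\<omega>. g (?T \<omega>)"])
        show "AE \<omega> in P \<theta>0 \<psi>0. ?L \<theta> \<psi> \<omega> = g (?T \<omega>)"
          using g(2) AEsp by eventually_elim (use gT in simp)
        have "(g \<circ> ?T) \<in> borel_measurable (sigma_O \<Omega> X R)"
          by (rule measurable_comp[OF Tm g(1)])
        then show "(\<lambda>\<omega>. g (?T \<omega>)) \<in> borel_measurable (sigma_O \<Omega> X R)" by (simp add: comp_def)
      qed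
    qed
  qed
qed

end
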